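(* Let $N\ge1$, let $\xi_0,\dots,\xi_N$ be the LGL nodes on $[-1,1]$ with LGL weights $\omega_0,\dots,\omega_N$, $\mathcal{M}=\mathrm{diag}(\omega_0,\dots,\omega_N)$, and let $\mathcal{V}_{ij}=L_j(\xi_i)$ ($i,j=0,\dots,N$) be the Vandermonde matrix of the normalized Legendre polynomials $L_j=\sqrt{(2j+1)/2}\,P_j$. Let $\mathcal{C}=\mathrm{diag}(\sigma_0,\dots,\sigma_N)$ with $0\le\sigma_i\le1$ for all $i$ and $\sigma_N=0$, and let $\mathcal{F}=\mathcal{V}\mathcal{C}\mathcal{V}^{-1}$. Then $\mathcal{F}$ is contractive in the sense that $$\mathcal{F}^T\mathcal{M}\,\mathcal{F}-\mathcal{M}\le 0$$ (negative semidefinite), i.e. $\|\mathcal{F}\mathbf{U}\|_N\le\|\mathbf{U}\|_N$ for all $\mathbf{U}\in\mathbb{R}^{N+1}$, where $\|\mathbf{U}\|_N^2=\mathbf{U}^T\mathcal{M}\mathbf{U}$.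
   Context: The LGL nodes are $\xi_0=-1$, $\xi_N=1$ and the zeros of $P_N'$ (with $P_N$ the degree-$N$ Legendre polynomial); the LGL weights are $\omega_i=\frac{2}{N(N+1)P_N(\xi_i)^2}$. In the paper the entries $\sigma_i$ come from a filter function $\sigma:\mathbb{R}^+\to[0,1]$ (Vandeven) that vanishes for arguments $\ge1$, so the highest mode is clipped, $\sigma_N=0$. *)

theory Defs
  imports Complex_Main "HOL-Computational_Algebra.Polynomial"
    "Jordan_Normal_Form.Gauss_Jordan_Elimination"
begin

text \<open>Legendre polynomials P_n (standard normalisation P_n(1) = 1), via Bonnet's recurrence
  (n+1) P_{n+1} = (2n+1) x P_n - n P_{n-1}.\<close>
fun legendre :: "nat \<Rightarrow> real poly" where
  "legendre 0 = 1"
| "legendre (Suc 0) = [:0, 1:]"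
| "legendre (Suc (Suc n)) =
     Polynomial.smult (1 / real (n + 2))
       (Polynomial.smult (real (2 * n + 3)) ([:0, 1:] * legendre (Suc n)) - Polynomial.smult (real (n + 1)) (legendre n))"

definition norm_legendre :: "nat \<Rightarrow> real \<Rightarrow> real" where
  "norm_legendre j x = sqrt ((2 * real j + 1) / 2) * poly (legendre j) x"

definition lgl_nodes :: "nat \<Rightarrow> real list" where
  "lgl_nodes N = sorted_list_of_set
     ({-1, 1} \<union> {x. -1 < x \<and> x < 1 \<and> poly (pderiv (legendre N)) x = 0})"

definition lgl_node :: "nat \<Rightarrow> nat \<Rightarrow> real" where
  "lgl_node N i = lgl_nodes N ! i"

definition lgl_weight :: "nat \<Rightarrow> nat \<Rightarrow> real" where
  "lgl_weight N i = 2 / (real N * (real N + 1) * (poly (legendre N) (lgl_node N i))\<^sup>2)"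

definition lgl_mass :: "nat \<Rightarrow> real mat" where
  "lgl_mass N = mat (N + 1) (N + 1) (\<lambda>(i, j). if i = j then lgl_weight N i else 0)"

definition lgl_vandermonde :: "nat \<Rightarrow> real mat" where
  "lgl_vandermonde N = mat (N + 1) (N + 1) (\<lambda>(i, j). norm_legendre j (lgl_node N i))"

definition filter_mat :: "nat \<Rightarrow> (nat \<Rightarrow> real) \<Rightarrow> real mat" where
  "filter_mat N \<sigma> =
     lgl_vandermonde N * mat (N + 1) (N + 1) (\<lambda>(i, j). if i = j then \<sigma> i else 0)
       * the (mat_inverse (lgl_vandermonde N))"

end

theory Submission
  imports Defs "Jordan_Normal_Form.Determinant"
begin


abbreviation P :: "nat \<Rightarrow> real poly" where "P \<equiv> legendre"

lemma leg_poly2: "poly (P (Suc (Suc n))) x =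
   ((2*real n+3) * x * poly (P (Suc n)) x - (real n+1) * poly (P n) x) / (real n+2)"
  by (simp add: field_simps)

lemma leg_dpoly2: "poly (pderiv (P (Suc (Suc n)))) x =
   ((2*real n+3) * (poly (P (Suc n)) x + x * poly (pderiv (P (Suc n))) x) - (real n+1) * poly (pderiv (P n)) x) / (real n+2)"
  by (simp add: pderiv_smult pderiv_diff pderiv_mult pderiv_pCons field_simps)

lemma leg_BC: "x * poly (pderiv (P (Suc n))) x - poly (pderiv (P n)) x = (real n+1) * poly (P (Suc n)) x
  \<and> (x^2-1) * poly (pderiv (P (Suc n))) x = (real n+1) * (x * poly (P (Suc n)) x - poly (P n) x)"
proof (induction n arbitrary: x)
  case 0
  then show ?case by (simp add: pderiv_pCons power2_eq_square)
next
  case (Suc n)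
  define m where "m = real n"
  define a where "a = poly (P n) x"
  define b where "b = poly (P (Suc n)) x"
  define c where "c = poly (P (Suc (Suc n))) x"
  define da where "da = poly (pderiv (P n)) x"
  define db where "db = poly (pderiv (P (Suc n))) x"
  define dc where "dc = poly (pderiv (P (Suc (Suc n)))) x"
  have B: "x * db - da = (m+1) * b" and C: "(x^2-1) * db = (m+1) * (x*b - a)"
    using Suc.IH[of x] unfolding a_def b_def db_def da_def m_def by auto
  have hc: "(m+2) * c = (2*m+3) * x * b - (m+1) * a"
    unfolding c_def a_def b_def leg_poly2 m_def by (simp add: field_simps)
  have hdc0: "(m+2) * dc = (2*m+3) * (b + x * db) - (m+1) * da"
    unfolding dc_def b_def db_def da_def leg_dpoly2 m_def by (simp add: field_simps)
  have m2: "m + 2 \<noteq> 0" unfolding m_def by simp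
  have da_eq: "da = x*db - (m+1)*b" using B by simp
  have "(m+2) * dc = (2*m+3) * (b + x * db) - (m+1) * (x*db - (m+1)*b)"
    using hdc0 da_eq by simp
  also have "\<dots> = (m + 2) * (x * db + (m+2) * b)" by (simp add: algebra_simps)
  finally have hdc: "dc = x * db + (m+2) * b" using m2 by simp
  have g1: "x * dc - db = (m+2) * c"
  proof -
    have "x*dc - db = (x^2-1)*db + (m+2)*x*b" by (simp add: hdc algebra_simps power2_eq_square)
    also have "\<dots> = (m+1)*(x*b-a) + (m+2)*x*b" using C by simp
    also have "\<dots> = (m+2)*c" using hc by (simp add: algebra_simps)
    finally show ?thesis .
  qed
  have g2: "(x^2-1) * dc = (m+2) * (x * c - b)"
  proof -
    have "(x^2-1)*dc = x*((x^2-1)*db) + (m+2)*(x^2-1)*b" by (simp add: hdc algebra_simps)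
    also have "\<dots> = x*((m+1)*(x*b-a)) + (m+2)*(x^2-1)*b" using C by simp
    also have "\<dots> = x*((2*m+3)*x*b - (m+1)*a) - (m+2)*b" by (simp add: algebra_simps power2_eq_square)
    also have "\<dots> = x*((m+2)*c) - (m+2)*b" using hc by simp
    also have "\<dots> = (m+2) * (x * c - b)" by (simp add: algebra_simps)
    finally show ?thesis .
  qed
  show ?case using g1 g2 unfolding a_def b_def c_def da_def db_def dc_def m_def
    by (simp add: add.commute)
qed

lemma leg_B: "[:0,1:] * pderiv (P (Suc n)) - pderiv (P n) = Polynomial.smult (real n+1) (P (Suc n))"
proof (rule poly_eq_poly_eq_iff[THEN iffD1], rule ext)
  fix x show "poly ([:0,1:] * pderiv (P (Suc n)) - pderiv (P n)) x = poly (Polynomial.smult (real n+1) (P (Suc n))) x"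
    using leg_BC[of x n] by simp
qed

lemma leg_C: "[:-1,0,1:] * pderiv (P (Suc n)) = Polynomial.smult (real n+1) ([:0,1:] * P (Suc n) - P n)"
proof (rule poly_eq_poly_eq_iff[THEN iffD1], rule ext)
  fix x show "poly ([:-1,0,1:] * pderiv (P (Suc n))) x = poly (Polynomial.smult (real n+1) ([:0,1:] * P (Suc n) - P n)) x"
  proof -
    have h: "(x^2-1) * poly (pderiv (P (Suc n))) x = (real n+1) * (x * poly (P (Suc n)) x - poly (P n) x)"
      using leg_BC[of x n] by blast
    have h2: "(x*x-1) * poly (pderiv (P (Suc n))) x = (real n+1) * (x * poly (P (Suc n)) x - poly (P n) x)"
      using h by (simp add: power2_eq_square)
    show ?thesis using h2 by (simp add: algebra_simps)
  qed
qed

definition Dop :: "real poly \<Rightarrow> real poly" where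
  "Dop p = pderiv ([:-1,0,1:] * pderiv p)"

lemma pderiv_X_mult: "pderiv ([:0,1:] * p) = p + [:0,1:] * pderiv p"
  by (simp add: pderiv_mult pderiv_pCons algebra_simps)

lemma leg_ode: "Dop (P n) = Polynomial.smult (real n * (real n + 1)) (P n)"
proof (cases n)
  case 0
  then show ?thesis by (simp add: Dop_def)
next
  case (Suc m)
  have "Dop (P n) = Polynomial.smult (real m+1) (P (Suc m) + [:0,1:] * pderiv (P (Suc m)) - pderiv (P m))"
    unfolding Dop_def Suc leg_C by (simp add: pderiv_smult pderiv_diff pderiv_pCons)
  also have "\<dots> = Polynomial.smult (real m+1) (P (Suc m) + Polynomial.smult (real m+1) (P (Suc m)))"
    using leg_B[of m] by (simp add: algebra_simps)
  also have "\<dots> = Polynomial.smult (real n * (real n + 1)) (P n)"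
    unfolding Suc by (simp add: poly_eq_iff algebra_simps)
  finally show ?thesis .
qed

lemma X_mult_coeff_Suc: "coeff ([:0,1:] * (p::real poly)) (Suc k) = coeff p k"
proof -
  have "[:0,1:] * p = pCons 0 p" by simp
  then show ?thesis by simp
qed

lemma leg_deg_le: "degree (P n) \<le> n"
proof (induction n rule: legendre.induct)
  case 1 then show ?case by simp
next
  case 2 then show ?case by simp
next
  case (3 n)
  have "[:0,1:] * P (Suc n) = pCons 0 (P (Suc n))" by simp
  moreover have "degree (pCons 0 (P (Suc n))) \<le> Suc (degree (P (Suc n)))" by (rule degree_pCons_le)
  ultimately have "degree ([:0,1:] * P (Suc n)) \<le> Suc (Suc n)"
    using 3 by simp
  moreover have "degree (P n) \<le> Suc (Suc n)" using 3 by simp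
  ultimately have dA: "degree ([:0,1:] * P (Suc n)) \<le> Suc (Suc n)" and dB: "degree (P n) \<le> Suc (Suc n)" by auto
  have "degree (Polynomial.smult (real (2 * n + 3)) ([:0, 1:] * P (Suc n)) - Polynomial.smult (real (n + 1)) (P n)) \<le> Suc (Suc n)"
    by (rule degree_diff_le; rule order.trans[OF degree_smult_le]) (use dA dB in auto)
  then have "degree (Polynomial.smult (1 / real (n + 2)) (Polynomial.smult (real (2 * n + 3)) ([:0, 1:] * P (Suc n)) - Polynomial.smult (real (n + 1)) (P n))) \<le> Suc (Suc n)"
    by (rule order.trans[OF degree_smult_le])
  then show ?case by (simp only: legendre.simps)
qed

lemma leg_lc: "coeff (P n) n > 0"
proof (induction n rule: legendre.induct)
  case 1 then show ?case by simp
next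
  case 2 then show ?case by simp
next
  case (3 n)
  have "coeff (P n) (Suc (Suc n)) = 0" using leg_deg_le[of n] by (simp add: coeff_eq_0)
  then have "coeff (P (Suc (Suc n))) (Suc (Suc n)) = (2*real n+3)/(real n+2) * coeff (P (Suc n)) (Suc n)"
    by (simp only: legendre.simps coeff_smult coeff_diff X_mult_coeff_Suc) (simp add: field_simps)
  then show ?case using 3 by (auto intro!: divide_pos_pos mult_pos_pos)
qed

lemma leg_deg: "degree (P n) = n"
  using leg_deg_le[of n] le_degree[of "P n" n] leg_lc[of n] by simp

lemma leg_one: "poly (P n) 1 = 1"
  by (induction n rule: legendre.induct) (simp_all add: leg_poly2 field_simps)


definition antider :: "real poly \<Rightarrow> real poly" where
  "antider p = (\<Sum>i\<le>degree p. monom (coeff p i / real (Suc i)) (Suc i))"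

lemma pderiv_sum': "pderiv (sum f A) = (\<Sum>x\<in>A. pderiv (f x))"
  using higher_pderiv_sum[of 1 f A] by simp

lemma pderiv_antider: "pderiv (antider p) = p"
proof -
  have "pderiv (antider p) = (\<Sum>i\<le>degree p. monom (coeff p i) i)"
    unfolding antider_def pderiv_sum' pderiv_monom by simp
  then show ?thesis using poly_as_sum_of_monoms by simp
qed

definition Iint :: "real poly \<Rightarrow> real" where
  "Iint p = poly (antider p) 1 - poly (antider p) (-1)"

lemma pderiv_zero_const: fixes q :: "real poly" assumes "pderiv q = 0" shows "poly q x = poly q y"
proof -
  have "degree q = 0" using assms pderiv_eq_0_iff[of q] by blast
  then have "q = [:coeff q 0:]" using degree_0_id by metis
  then obtain c where "q = [:c:]" by blast
  then show ?thesis by simp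
qed

lemma Iint_deriv: assumes "pderiv F = p" shows "Iint p = poly F 1 - poly F (-1)"
proof -
  have "pderiv (F - antider p) = 0" using assms by (simp add: pderiv_diff pderiv_antider)
  then have "poly (F - antider p) 1 = poly (F - antider p) (-1)" by (rule pderiv_zero_const)
  then show ?thesis unfolding Iint_def by simp
qed

lemma Iint_pderiv: "Iint (pderiv F) = poly F 1 - poly F (-1)"
  by (rule Iint_deriv) simp

lemma Iint_add: "Iint (p + q) = Iint p + Iint q"
proof -
  have "pderiv (antider p + antider q) = p + q" by (simp add: pderiv_add pderiv_antider)
  from Iint_deriv[OF this] show ?thesis unfolding Iint_def by simp
qed

lemma Iint_smult: "Iint (Polynomial.smult c p) = c * Iint p"
proof -
  have "pderiv (Polynomial.smult c (antider p)) = Polynomial.smult c p" by (simp add: pderiv_smult pderiv_antider)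
  from Iint_deriv[OF this] show ?thesis unfolding Iint_def by (simp add: algebra_simps)
qed

lemma Iint_diff: "Iint (p - q) = Iint p - Iint q"
proof -
  have "pderiv (antider p - antider q) = p - q" by (simp add: pderiv_diff pderiv_antider)
  from Iint_deriv[OF this] show ?thesis unfolding Iint_def by simp
qed

lemma Iint_sum: "Iint (sum f A) = (\<Sum>x\<in>A. Iint (f x))"
proof (induction A rule: infinite_finite_induct)
  case (infinite A)
  then show ?case by (simp add: Iint_def antider_def)
next
  case empty
  then show ?case by (simp add: Iint_def antider_def)
next
  case (insert x F)
  then show ?case by (simp add: Iint_add)
qed

lemma Iint_pos:
  assumes p0: "p \<noteq> 0" and nn: "\<And>x. -1 < x \<Longrightarrow> x < 1 \<Longrightarrow> poly p x \<ge> 0"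
  shows "Iint p > 0"
proof -
  define F where "F = antider p"
  have dF: "\<And>x. DERIV (poly F) x :> poly p x"
    using poly_DERIV[of F] unfolding F_def pderiv_antider by simp
  have cont: "\<And>a b. continuous_on {a..b} (poly F)" by (simp add: continuous_intros)
  have mono: "poly F a \<le> poly F b" if "-1 \<le> a" "a \<le> b" "b \<le> 1" for a b
  proof (rule DERIV_nonneg_imp_increasing_open[OF that(2) _ cont])
    fix x assume "a < x" "x < b"
    then have "-1 < x" "x < 1" using that by auto
    then show "\<exists>y. DERIV (poly F) x :> y \<and> y \<ge> 0"
      by (intro exI[of _ "poly p x"] conjI dF nn)
  qed
  have ge: "Iint p \<ge> 0" unfolding Iint_def F_def[symmetric] using mono[of "-1" 1] by simp
  have ne: "Iint p \<noteq> 0"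
  proof
    assume "Iint p = 0"
    then have eq: "poly F 1 = poly F (-1)" unfolding Iint_def F_def by simp
    have const: "poly F y = poly F (-1)" if "-1 \<le> y" "y \<le> 1" for y
      using mono[of "-1" y] mono[of y 1] that eq by simp
    have "poly p x = 0" if "x \<in> {-1<..<1}" for x
    proof (rule DERIV_local_const[OF dF])
      show "0 < min (x+1) (1-x)" using that by simp
      show "\<forall>y. \<bar>x - y\<bar> < min (x+1) (1-x) \<longrightarrow> poly F x = poly F y"
      proof (intro allI impI)
        fix y assume "\<bar>x - y\<bar> < min (x+1) (1-x)"
        then have "-1 \<le> y" "y \<le> 1" by (auto simp: abs_less_iff)
        then show "poly F x = poly F y" using const[of x] const[of y] that by simp
      qed
    qed
    then have "{-1<..<(1::real)} \<subseteq> {x. poly p x = 0}" by auto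
    moreover have "infinite {-1<..<(1::real)}" by simp
    ultimately have "infinite {x. poly p x = 0}" using finite_subset by blast
    with poly_roots_finite[OF p0] show False by simp
  qed
  from ge ne show ?thesis by simp
qed


lemma Iint_vanish: assumes "poly h 1 = 0" "poly h (-1) = 0" shows "Iint (pderiv h) = 0"
  using assms by (simp add: Iint_pderiv)

lemma green_gen: "pderiv (W * pderiv p) * s - p * pderiv (W * pderiv s) = pderiv (W * (pderiv p * s - p * pderiv s))"
  for W p s :: "real poly"
  by (simp add: pderiv_mult pderiv_diff algebra_simps)

lemma green: "Iint (Dop p * s) = Iint (p * Dop s)"
proof -
  have "Dop p * s - p * Dop s = pderiv ([:-1,0,1:] * (pderiv p * s - p * pderiv s))"
    unfolding Dop_def by (rule green_gen)
  then have "Iint (Dop p * s) - Iint (p * Dop s) = 0"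
    by (simp add: Iint_diff[symmetric] Iint_pderiv)
  then show ?thesis by simp
qed

lemma Dop_alt_gen: "pderiv (W * pderiv p) = W * pderiv (pderiv p) + pderiv W * pderiv p"
  for W p :: "real poly"
  by (simp add: pderiv_mult algebra_simps)

lemma Dop_alt: "Dop p = [:-1,0,1:] * pderiv (pderiv p) + [:0,2:] * pderiv p"
proof -
  have "pderiv [:-1,0,1:] = [:0,2::real:]" by (simp add: pderiv_pCons)
  then show ?thesis unfolding Dop_def Dop_alt_gen by simp
qed

lemma Dop_monom: "Dop (monom 1 k) = Polynomial.smult (real k * (real k + 1)) (monom 1 k)
   - Polynomial.smult (real k * (real k - 1)) (monom 1 (k - 2))"
proof (rule poly_eq_poly_eq_iff[THEN iffD1], rule ext)
  fix x :: real
  consider "k = 0" | "k = 1" | j where "k = Suc (Suc j)" by (metis One_nat_def not0_implies_Suc)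
  then show "poly (Dop (monom 1 k)) x = poly (Polynomial.smult (real k * (real k + 1)) (monom 1 k)
   - Polynomial.smult (real k * (real k - 1)) (monom 1 (k - 2))) x"
  proof cases
    case 1 then show ?thesis by (simp add: Dop_alt pderiv_monom)
  next
    case 2 then show ?thesis by (simp add: Dop_alt pderiv_monom poly_monom)
  next
    case 3 then show ?thesis by (simp add: Dop_alt pderiv_monom poly_monom algebra_simps power2_eq_square)
  qed
qed

lemma leg_orth_monom: "k < n \<Longrightarrow> Iint (P n * monom 1 k) = 0"
proof (induction k rule: less_induct)
  case (less k)
  define I where "I j = Iint (P n * monom 1 j)" for j
  have A: "Iint (Dop (P n) * monom 1 k) = real n * (real n + 1) * I k"
    unfolding leg_ode I_def by (simp add: Iint_smult)
  have B: "Iint (P n * Dop (monom 1 k)) = real k * (real k + 1) * I k - real k * (real k - 1) * I (k - 2)"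
    unfolding Dop_monom I_def by (simp add: algebra_simps Iint_diff Iint_smult)
  have Z: "real k * (real k - 1) * I (k - 2) = 0"
  proof (cases "k \<ge> 2")
    case True
    then have "I (k-2) = 0" unfolding I_def using less by simp
    then show ?thesis by simp
  next
    case False
    then have "k = 0 \<or> k = 1" by auto
    then show ?thesis by auto
  qed
  have "real n * (real n + 1) * I k = real k * (real k + 1) * I k"
    using green[of "P n" "monom 1 k"] A B Z by linarith
  then have eq: "(real n * (real n + 1) - real k * (real k + 1)) * I k = 0"
    by (simp add: left_diff_distrib)
  have "k * (k + 1) < n * (n + 1)" using less.prems by (intro mult_strict_mono) auto
  then have "real k * (real k + 1) < real n * (real n + 1)"
    by (metis of_nat_1 of_nat_add of_nat_less_iff of_nat_mult)
  with eq show ?case unfolding I_def by simp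
qed

lemma leg_orth: assumes "degree s < n" shows "Iint (P n * s) = 0"
proof -
  have m: "monom c i = Polynomial.smult c (monom 1 i)" for c :: real and i by (simp add: smult_monom)
  have "P n * s = (\<Sum>i\<le>degree s. P n * monom (coeff s i) i)"
    by (metis poly_as_sum_of_monoms sum_distrib_left)
  also have "\<dots> = (\<Sum>i\<le>degree s. Polynomial.smult (coeff s i) (P n * monom 1 i))"
    by (subst m) (simp add: mult_smult_right)
  finally have "Iint (P n * s) = (\<Sum>i\<le>degree s. coeff s i * Iint (P n * monom 1 i))"
    by (simp add: Iint_sum Iint_smult)
  also have "\<dots> = 0" using assms by (auto intro!: sum.neutral simp: leg_orth_monom)
  finally show ?thesis .
qed

lemma dleg_eq_gen: "W * pderiv p * s = pderiv (W * s * p) - p * pderiv (W * s)" for W p s :: "real poly"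
  by (simp add: pderiv_mult algebra_simps)

lemma dleg_orth: assumes "degree s + 1 < n"
  shows "Iint ([:1,0,-1:] * pderiv (P n) * s) = 0"
proof -
  have eq: "[:1,0,-1:] * pderiv (P n) * s = pderiv ([:1,0,-1:] * s * P n) - P n * pderiv ([:1,0,-1:] * s)"
    by (rule dleg_eq_gen)
  have "degree ([:1,0,-1:] * s) \<le> 2 + degree s"
    using degree_mult_le[of "[:1,0,-1:]" s] by simp
  then have "degree (pderiv ([:1,0,-1:] * s)) < n" using assms by (simp add: degree_pderiv)
  then have "Iint (P n * pderiv ([:1,0,-1:] * s)) = 0" by (rule leg_orth)
  moreover have "Iint (pderiv ([:1,0,-1:] * s * P n)) = 0" by (rule Iint_vanish) simp_all
  ultimately show ?thesis unfolding eq Iint_diff by simp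
qed


lemma neg_factor: assumes "(K::real) > 0" "K * H < 0" shows "H < 0"
proof (rule ccontr)
  assume "\<not> H < 0"
  then have "0 \<le> H" by linarith
  then have "0 \<le> K * H" using assms(1) by (intro mult_nonneg_nonneg) auto
  with assms(2) show False by linarith
qed

lemma odd_root_exists:
  fixes g :: "real poly"
  assumes "a < b" "poly g a * poly g b < 0"
  shows "\<exists>r. a < r \<and> r < b \<and> odd (order r g)"
  using assms
proof (induction "degree g" arbitrary: g rule: less_induct)
  case less
  have g0: "g \<noteq> 0" using less.prems by auto
  obtain r where r: "a < r" "r < b" "poly g r = 0" using poly_IVT[OF less.prems] by auto
  define m where "m = order r g"
  have m0: "m \<noteq> 0" using r(3) g0 order_root[of g r] m_def by simp
  show ?case
  proof (cases "odd m")
    case True then show ?thesis using r m_def by auto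
  next
    case False
    obtain h where h: "g = [:-r,1:]^m * h" and hndvd: "\<not> [:-r,1:] dvd h"
      using order_decomp[OF g0] m_def by auto
    have hr: "poly h r \<noteq> 0" using hndvd poly_eq_0_iff_dvd by blast
    have h0: "h \<noteq> 0" using hr by auto
    have pos: "(x - r)^m > 0" if "x \<noteq> r" for x
      using False that by (simp add: zero_less_power_eq)
    have "poly g a * poly g b = ((a-r)^m * (b-r)^m) * (poly h a * poly h b)"
      unfolding h by (simp add: poly_power algebra_simps)
    moreover have "(a-r)^m * (b-r)^m > 0" using pos[of a] pos[of b] r by simp
    ultimately have "((a-r)^m * (b-r)^m) * (poly h a * poly h b) < 0" using less.prems(2) by simp
    then have hab: "poly h a * poly h b < 0" using \<open>(a-r)^m * (b-r)^m > 0\<close> neg_factor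
      by blast
    have "degree g = m + degree h" unfolding h
      by (subst degree_mult_eq) (use h0 in \<open>auto simp: degree_linear_power\<close>)
    then have "degree h < degree g" using m0 by simp
    from less.hyps[OF this less.prems(1) hab] obtain r' where
      r': "a < r'" "r' < b" "odd (order r' h)" by auto
    have "order r h = 0" using hr order_root[of h r] by simp
    then have "r' \<noteq> r" using r'(3) by auto
    then have "poly ([:-r,1:]^m) r' \<noteq> 0" by (simp add: poly_power)
    then have "order r' ([:-r,1:]^m) = 0" using order_root[of "[:-r,1:]^m" r'] \<open>r' \<noteq> r\<close> by simp
    then have "order r' g = order r' h" unfolding h using g0 h by (simp add: order_mult)
    then show ?thesis using r' by auto
  qed
qed

lemma sign_const:
  fixes g :: "real poly"
  assumes ev: "\<And>r. -1 < r \<Longrightarrow> r < 1 \<Longrightarrow> even (order r g)"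
    and x: "-1 < x" "x < 1" and y: "-1 < y" "y < 1"
  shows "poly g x * poly g y \<ge> 0"
proof -
  have main: "poly g u * poly g v \<ge> 0" if "-1 < u" "u < v" "v < 1" for u v
  proof (rule ccontr)
    assume "\<not> ?thesis"
    then have "poly g u * poly g v < 0" by simp
    from odd_root_exists[OF that(2) this] obtain r where "u < r" "r < v" "odd (order r g)" by auto
    with ev[of r] that show False by auto
  qed
  consider "x < y" | "x = y" | "y < x" by linarith
  then show ?thesis
  proof cases
    case 1 then show ?thesis using main x y by auto
  next
    case 2 then show ?thesis by simp
  next
    case 3 then show ?thesis using main[of y x] x y by (simp add: mult.commute)
  qed
qed

lemma order_prod_linear:
  fixes R :: "real set"
  assumes "finite R"
  shows "order x (\<Prod>t\<in>R. [:-t,1:]) = (if x \<in> R then 1 else 0)"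
  using assms
proof (induction R rule: finite_induct)
  case empty
  have "order x (1::real poly) = 0" using order_root[of "1::real poly" x] by simp
  then show ?case by simp
next
  case (insert t F)
  have nz: "(\<Prod>t\<in>F. [:-t,1:]) \<noteq> (0::real poly)" by (simp add: prod_zero_iff insert)
  have e: "(\<Prod>u\<in>insert t F. [:-u,1:]) = [:-t,1:] * (\<Prod>u\<in>F. [:-u,1::real:])"
    using insert(1,2) by (rule prod.insert)
  have nz2: "[:-t,1:] * (\<Prod>u\<in>F. [:-u,1::real:]) \<noteq> 0"
    by (intro no_zero_divisors) (use nz in auto)
  have o1: "order x (\<Prod>t\<in>insert t F. [:-t,1:]) = order x [:-t,1:] + order x (\<Prod>t\<in>F. [:-t,1:])"
    unfolding e by (rule order_mult[OF nz2])
  have o2: "order x [:-t,1:] = (if x = t then 1 else 0)"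
  proof (cases "x = t")
    case True then show ?thesis using order_power_n_n[of t 1] by simp
  next
    case False
    then have "poly [:-t,1:] x \<noteq> 0" by simp
    then show ?thesis using False order_root[of "[:-t,1:]" x] by simp
  qed
  have "order x (\<Prod>t\<in>insert t F. [:-t,1:]) = (if x = t then 1 else 0) + (if x \<in> F then 1 else 0)"
    unfolding o1 o2 insert.IH ..
  then show ?case using insert.hyps(2) by auto
qed

lemma pderiv_leg_ne: "n \<ge> 1 \<Longrightarrow> pderiv (P n) \<noteq> 0"
  using pderiv_eq_0_iff[of "P n"] leg_deg[of n] by simp

lemma card_interior_roots:
  assumes N: "N \<ge> 1"
  shows "card {x. -1 < x \<and> x < 1 \<and> poly (pderiv (P N)) x = 0} = N - 1"
proof -
  define p where "p = pderiv (P N)"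
  have p0: "p \<noteq> 0" using pderiv_leg_ne[OF N] p_def by simp
  have dp: "degree p = N - 1" unfolding p_def by (simp add: degree_pderiv leg_deg)
  define Z where "Z = {x. -1 < x \<and> x < 1 \<and> poly p x = 0}"
  have finZ: "finite Z" unfolding Z_def using poly_roots_finite[OF p0] by (rule rev_finite_subset) auto
  have Zsub: "Z \<subseteq> {x. poly p x = 0}" unfolding Z_def by auto
  have up: "card Z \<le> N - 1"
    using card_mono[OF poly_roots_finite[OF p0] Zsub] card_poly_roots_bound[OF p0] dp by linarith
  define R where "R = {r. -1 < r \<and> r < 1 \<and> odd (order r p)}"
  have RZ: "R \<subseteq> Z"
  proof
    fix r assume "r \<in> R"
    then have "-1 < r" "r < 1" "odd (order r p)" unfolding R_def by auto
    moreover from this(3) have "order r p \<noteq> 0" by (cases "order r p") auto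
    ultimately show "r \<in> Z" unfolding Z_def using order_root[of p r] by simp
  qed
  have finR: "finite R" using finite_subset[OF RZ finZ] .
  have low: "card R \<ge> N - 1"
  proof (rule ccontr)
    assume "\<not> ?thesis"
    then have cR: "card R + 1 < N" by simp
    define s where "s = (\<Prod>t\<in>R. [:-t,1::real:])"
    have s0: "s \<noteq> 0" unfolding s_def by (simp add: prod_zero_iff finR)
    have ds: "degree s = card R" unfolding s_def
      by (subst degree_prod_eq_sum_degree) auto
    have I0: "Iint ([:1,0,-1:] * p * s) = 0" unfolding p_def
      by (rule dleg_orth) (use ds cR in simp)
    define g where "g = p * s"
    have g0: "g \<noteq> 0" unfolding g_def using p0 s0 by simp
    have ev: "even (order r g)" if "-1 < r" "r < 1" for r
    proof -
      have "order r (p * s) = order r p + order r s"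
        by (rule order_mult) (use g0 in \<open>simp add: g_def\<close>)
      also have "order r s = (if r \<in> R then 1 else 0)"
        unfolding s_def by (rule order_prod_linear[OF finR])
      finally have "order r g = order r p + (if r \<in> R then 1 else 0)" unfolding g_def .
      then show ?thesis using that unfolding R_def by auto
    qed
    obtain y0 where y0: "-1 < y0" "y0 < 1" "poly g y0 \<noteq> 0"
    proof -
      have "\<not> {-1<..<(1::real)} \<subseteq> {x. poly g x = 0}"
      proof
        assume sub: "{-1<..<(1::real)} \<subseteq> {x. poly g x = 0}"
        have "finite {-1<..<(1::real)}" by (rule finite_subset[OF sub poly_roots_finite[OF g0]])
        then show False using infinite_Ioo[of "-1::real" 1] by simp
      qed
      then obtain y where "y \<in> {-1<..<(1::real)}" "poly g y \<noteq> 0" by blast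
      then show ?thesis by (auto intro: that)
    qed
    define f where "f = [:1,0,-1:] * g"
    have w0: "[:1,0,-1::real:] \<noteq> 0" by simp
    have f0: "f \<noteq> 0" unfolding f_def using g0 w0 mult_eq_0_iff by blast
    have If: "Iint f = 0" using I0 unfolding f_def g_def by (simp only: mult.assoc)
    have w: "poly [:1,0,-1:] x > 0" if "-1 < x" "x < 1" for x :: real
    proof -
      have "x * x < 1"
      proof (cases "x \<ge> 0")
        case True
        then have "x * x < 1 * 1" using that by (intro mult_strict_mono) auto
        then show ?thesis by simp
      next
        case False
        then have "(-x) * (-x) < 1 * 1" using that by (intro mult_strict_mono) auto
        then show ?thesis by simp
      qed
      then show ?thesis by simp
    qed
    show False
    proof (cases "poly g y0 > 0")
      case True
      have "poly f x \<ge> 0" if "-1 < x" "x < 1" for x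
      proof -
        have "poly g x * poly g y0 \<ge> 0" using sign_const[OF ev that y0(1,2)] by blast
        then have gx: "poly g x \<ge> 0" using True by (simp add: zero_le_mult_iff)
        have "poly f x = poly [:1,0,-1:] x * poly g x" unfolding f_def by (rule poly_mult)
        also have "\<dots> \<ge> 0" by (rule mult_nonneg_nonneg[OF less_imp_le[OF w[OF that]] gx])
        finally show ?thesis .
      qed
      then have "Iint f > 0" by (rule Iint_pos[OF f0])
      then show False using If by simp
    next
      case False
      then have neg: "poly g y0 < 0" using y0(3) by simp
      have "poly (Polynomial.smult (-1) f) x \<ge> 0" if "-1 < x" "x < 1" for x
      proof -
        have "poly g x * poly g y0 \<ge> 0" using sign_const[OF ev that y0(1,2)] by blast
        then have gx: "poly g x \<le> 0" using neg by (simp add: zero_le_mult_iff)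
        have "poly f x = poly [:1,0,-1:] x * poly g x" unfolding f_def by (rule poly_mult)
        also have "\<dots> \<le> 0" by (rule mult_nonneg_nonpos[OF less_imp_le[OF w[OF that]] gx])
        finally show ?thesis by simp
      qed
      moreover have nz: "Polynomial.smult (-1) f \<noteq> 0" using f0 by (simp add: smult_eq_0_iff)
      ultimately have "Iint (Polynomial.smult (-1) f) > 0" using Iint_pos[OF nz] by blast
      then show False using If Iint_smult[of "-1" f] by simp
    qed
  qed
  have "card R \<le> card Z" by (rule card_mono[OF finZ RZ])
  with low up show ?thesis unfolding Z_def p_def by simp
qed


definition Sn :: "nat \<Rightarrow> real set" where
  "Sn N = {-1, 1} \<union> {x. -1 < x \<and> x < 1 \<and> poly (pderiv (P N)) x = 0}"

lemma Sn_finite: "N \<ge> 1 \<Longrightarrow> finite (Sn N)"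
proof -
  assume N: "N \<ge> 1"
  have "finite {x. poly (pderiv (P N)) x = 0}" by (rule poly_roots_finite[OF pderiv_leg_ne[OF N]])
  then have "finite {x. -1 < x \<and> x < 1 \<and> poly (pderiv (P N)) x = 0}" by (rule rev_finite_subset) auto
  then show ?thesis unfolding Sn_def by simp
qed

lemma Sn_card: assumes N: "N \<ge> 1" shows "card (Sn N) = N + 1"
proof -
  define Z where "Z = {x. -1 < x \<and> x < 1 \<and> poly (pderiv (P N)) x = 0}"
  have fZ: "finite Z" using Sn_finite[OF N] unfolding Sn_def Z_def by simp
  have "Sn N = insert (-1) (insert 1 Z)" unfolding Sn_def Z_def by auto
  moreover have "-1 \<notin> insert 1 Z" "1 \<notin> Z" unfolding Z_def by auto
  ultimately have "card (Sn N) = Suc (Suc (card Z))" using fZ by simp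
  then show ?thesis using card_interior_roots[OF N] N unfolding Z_def by simp
qed

lemma sum_single: assumes "finite A" "x \<in> A" "\<And>y. y \<in> A \<Longrightarrow> y \<noteq> x \<Longrightarrow> f y = 0"
  shows "sum f A = (f x :: real)"
proof -
  have "sum f A = f x + sum f (A - {x})" by (rule sum.remove[OF assms(1,2)])
  also have "sum f (A - {x}) = 0" using assms(3) by (intro sum.neutral) auto
  finally show ?thesis by simp
qed

lemma prod_linear_nz: "(\<Prod>t\<in>A. [:-t,1::real:]) \<noteq> 0"
  by (cases "finite A") (auto simp: prod_zero_iff)

lemma prod_linear_degree: "finite A \<Longrightarrow> degree (\<Prod>t\<in>A. [:-t,1::real:]) = card A"
  by (subst degree_prod_eq_sum_degree) auto

lemma prod_linear_lc: "lead_coeff (\<Prod>t\<in>A. [:-t,1::real:]) = 1"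
  by (simp add: lead_coeff_prod)

lemma prod_form:
  fixes p :: "real poly"
  assumes "finite T" "card T = degree p" "\<And>t. t \<in> T \<Longrightarrow> poly p t = 0" "p \<noteq> 0"
  shows "p = Polynomial.smult (lead_coeff p) (\<Prod>t\<in>T. [:-t,1:])"
  using assms
proof (induction T arbitrary: p rule: finite_induct)
  case empty
  then have "degree p = 0" by simp
  then show ?case by (simp add: degree_0_id)
next
  case (insert a F)
  have "poly p a = 0" using insert.prems by simp
  then obtain p' where p': "p = [:-a,1:] * p'" using poly_eq_0_iff_dvd by (metis dvdE)
  have p'0: "p' \<noteq> 0" using p' insert.prems(3) by auto
  have dp: "degree p = Suc (degree p')" unfolding p' using p'0 by (subst degree_mult_eq) auto
  have cF: "card F = degree p'" using insert.prems(1) insert.hyps dp by simp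
  have roots: "poly p' t = 0" if "t \<in> F" for t
  proof -
    have "poly p t = 0" using insert.prems(2) that by simp
    moreover have "t \<noteq> a" using that insert.hyps by auto
    ultimately show ?thesis unfolding p' by simp
  qed
  have IH: "p' = Polynomial.smult (lead_coeff p') (\<Prod>t\<in>F. [:-t,1:])"
    by (rule insert.IH[OF cF roots p'0])
  have lc: "lead_coeff p = lead_coeff p'" unfolding p' by (simp only: lead_coeff_mult) simp
  have "p = [:-a,1:] * Polynomial.smult (lead_coeff p') (\<Prod>t\<in>F. [:-t,1:])" using p' IH by metis
  also have "\<dots> = Polynomial.smult (lead_coeff p) (\<Prod>t\<in>insert a F. [:-t,1:])"
    using insert.hyps lc by (simp add: mult_smult_right)
  finally show ?case .
qed

definition dd :: "real set \<Rightarrow> real \<Rightarrow> real" where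
  "dd T x = (\<Prod>y\<in>T-{x}. (x - y))"

lemma dd_nz: assumes "finite T" shows "dd T x \<noteq> 0"
proof -
  have "finite (T - {x})" using assms by simp
  then show ?thesis unfolding dd_def by simp
qed

lemma poly_prod_linear: "poly (\<Prod>t\<in>A. [:-t,1::real:]) x = (\<Prod>t\<in>A. x - t)"
  by (simp add: poly_prod)

lemma lagrange_sum:
  fixes g :: "real poly" and T :: "real set"
  assumes fT: "finite T" and dg: "degree g + 2 \<le> card T"
  shows "(\<Sum>x\<in>T. poly g x / dd T x) = 0"
proof -
  define m where "m = card T"
  define L where "L = (\<Sum>x\<in>T. Polynomial.smult (poly g x / dd T x) (\<Prod>y\<in>T-{x}. [:-y,1:]))"
  have valL: "poly L z = poly g z" if z: "z \<in> T" for z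
  proof -
    have "poly L z = (\<Sum>x\<in>T. poly g x / dd T x * (\<Prod>y\<in>T-{x}. z - y))"
      unfolding L_def by (simp add: poly_sum poly_prod_linear)
    also have "\<dots> = poly g z / dd T z * (\<Prod>y\<in>T-{z}. z - y)"
    proof (rule sum_single[OF fT z])
      fix x assume "x \<in> T" "x \<noteq> z"
      then have "z \<in> T - {x}" using z by auto
      then have "(\<Prod>y\<in>T-{x}. z - y) = 0" using fT by (auto simp: prod_zero_iff)
      then show "poly g x / dd T x * (\<Prod>y\<in>T-{x}. z - y) = 0" by simp
    qed
    also have "\<dots> = poly g z" using dd_nz[OF fT, of z] unfolding dd_def by simp
    finally show ?thesis .
  qed
  have m2: "m \<ge> 2" using dg m_def by simp
  have degL: "degree L \<le> m - 1"
    unfolding L_def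
  proof (rule degree_sum_le[OF fT])
    fix x assume "x \<in> T"
    have "degree (\<Prod>y\<in>T-{x}. [:-y,1::real:]) = m - 1"
      using fT \<open>x \<in> T\<close> by (simp add: prod_linear_degree m_def card_Diff_singleton)
    then show "degree (Polynomial.smult (poly g x / dd T x) (\<Prod>y\<in>T-{x}. [:-y,1:])) \<le> m - 1"
      using degree_smult_le[of "poly g x / dd T x" "\<Prod>y\<in>T-{x}. [:-y,1::real:]"] by linarith
  qed
  have Lg: "L = g"
  proof (rule ccontr)
    assume ne: "L \<noteq> g"
    then have nz: "L - g \<noteq> 0" by simp
    have d1: "degree (L - g) \<le> m - 1" using degL dg m_def by (intro degree_diff_le) auto
    have "T \<subseteq> {x. poly (L - g) x = 0}" using valL by auto
    then have "card T \<le> card {x. poly (L - g) x = 0}" by (rule card_mono[OF poly_roots_finite[OF nz]])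
    with d1 show False using card_poly_roots_bound[OF nz] m_def m2 by linarith
  qed
  have "coeff L (m - 1) = (\<Sum>x\<in>T. poly g x / dd T x * coeff (\<Prod>y\<in>T-{x}. [:-y,1::real:]) (m - 1))"
    unfolding L_def by (simp add: coeff_sum)
  also have "\<dots> = (\<Sum>x\<in>T. poly g x / dd T x)"
  proof (rule sum.cong[OF refl])
    fix x assume "x \<in> T"
    have "degree (\<Prod>y\<in>T-{x}. [:-y,1::real:]) = m - 1"
      using fT \<open>x \<in> T\<close> by (simp add: prod_linear_degree m_def card_Diff_singleton)
    then have "coeff (\<Prod>y\<in>T-{x}. [:-y,1::real:]) (m - 1) = 1"
      using prod_linear_lc[of "T-{x}"] by simp
    then show "poly g x / dd T x * coeff (\<Prod>y\<in>T-{x}. [:-y,1::real:]) (m - 1) = poly g x / dd T x" by simp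
  qed
  finally have "(\<Sum>x\<in>T. poly g x / dd T x) = coeff g (m - 1)" using Lg by simp
  also have "\<dots> = 0" using dg m_def by (intro coeff_eq_0) simp
  finally show ?thesis .
qed

lemma pderiv_prod_at_root:
  fixes T :: "real set"
  assumes fT: "finite T" and x: "x \<in> T"
  shows "poly (pderiv (\<Prod>t\<in>T. [:-t,1:])) x = dd T x"
proof -
  have "poly (pderiv (\<Prod>t\<in>T. [:-t,1:])) x = (\<Sum>a\<in>T. \<Prod>t\<in>T-{a}. x - t)"
    by (simp add: pderiv_prod poly_sum poly_prod pderiv_pCons)
  also have "\<dots> = (\<Prod>t\<in>T-{x}. x - t)"
  proof (rule sum_single[OF fT x])
    fix a assume "a \<in> T" "a \<noteq> x"
    then have "x \<in> T - {a}" using x by auto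
    then show "(\<Prod>t\<in>T-{a}. x - t) = 0" using fT by (auto simp: prod_zero_iff)
  qed
  finally show ?thesis unfolding dd_def .
qed


definition qN :: "nat \<Rightarrow> real poly" where
  "qN N = [:1,0,-1:] * pderiv (P N)"

lemma qN_pderiv: "pderiv (qN N) = Polynomial.smult (-(real N * (real N + 1))) (P N)"
proof -
  have "qN N = - ([:-1,0,1:] * pderiv (P N))" unfolding qN_def by simp
  then have "pderiv (qN N) = - pderiv ([:-1,0,1:] * pderiv (P N))" by (simp only: pderiv_minus)
  then have "pderiv (qN N) = - Dop (P N)" unfolding Dop_def .
  then show ?thesis unfolding leg_ode by simp
qed

lemma qN_nz: "N \<ge> 1 \<Longrightarrow> qN N \<noteq> 0"
  unfolding qN_def using pderiv_leg_ne[of N] by (intro no_zero_divisors) auto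

lemma qN_deg: assumes N: "N \<ge> 1" shows "degree (qN N) = N + 1"
proof -
  have "degree (qN N) = degree [:1,0,-1::real:] + degree (pderiv (P N))"
    unfolding qN_def by (rule degree_mult_eq) (use pderiv_leg_ne[OF N] in auto)
  also have "\<dots> = 2 + (N - 1)" by (simp add: degree_pderiv leg_deg)
  finally show ?thesis using N by simp
qed

lemma qN_roots: assumes "x \<in> Sn N" shows "poly (qN N) x = 0"
  using assms unfolding Sn_def qN_def by auto

lemma qN_form: assumes N: "N \<ge> 1"
  shows "qN N = Polynomial.smult (lead_coeff (qN N)) (\<Prod>t\<in>Sn N. [:-t,1:])"
  by (rule prod_form[OF Sn_finite[OF N]]) (use Sn_card[OF N] qN_deg[OF N] qN_roots qN_nz[OF N] in auto)

lemma P_at_node: assumes N: "N \<ge> 1" and x: "x \<in> Sn N"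
  shows "-(real N * (real N + 1)) * poly (P N) x = lead_coeff (qN N) * dd (Sn N) x"
proof -
  have "poly (pderiv (qN N)) x = lead_coeff (qN N) * poly (pderiv (\<Prod>t\<in>Sn N. [:-t,1:])) x"
    by (subst qN_form[OF N]) (simp add: pderiv_smult)
  also have "\<dots> = lead_coeff (qN N) * dd (Sn N) x"
    using pderiv_prod_at_root[OF Sn_finite[OF N] x] by simp
  finally show ?thesis unfolding qN_pderiv by simp
qed

lemma disc_sum: assumes N: "N \<ge> 1" and dg: "degree g + 1 \<le> N"
  shows "(\<Sum>x\<in>Sn N. poly g x / poly (P N) x) = 0"
proof -
  define c where "c = real N * (real N + 1)"
  define l where "l = lead_coeff (qN N)"
  have c0: "c \<noteq> 0" using N unfolding c_def by simp
  have l0: "l \<noteq> 0" unfolding l_def using qN_nz[OF N] by simp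
  have "(\<Sum>x\<in>Sn N. poly g x / poly (P N) x) = (\<Sum>x\<in>Sn N. (- c / l) * (poly g x / dd (Sn N) x))"
  proof (rule sum.cong[OF refl])
    fix x assume x: "x \<in> Sn N"
    have d0: "dd (Sn N) x \<noteq> 0" by (rule dd_nz[OF Sn_finite[OF N]])
    have eqP: "poly (P N) x = - (l * dd (Sn N) x) / c"
      using P_at_node[OF N x] c0 unfolding c_def[symmetric] l_def[symmetric] by (simp add: field_simps)
    have "poly g x / poly (P N) x = poly g x / (- (l * dd (Sn N) x) / c)" by (simp only: eqP)
    also have "\<dots> = (- c / l) * (poly g x / dd (Sn N) x)"
      using c0 l0 d0 by (simp add: field_simps)
    finally show "poly g x / poly (P N) x = (- c / l) * (poly g x / dd (Sn N) x)" .
  qed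
  also have "\<dots> = (- c / l) * (\<Sum>x\<in>Sn N. poly g x / dd (Sn N) x)" by (simp add: sum_distrib_left)
  also have "(\<Sum>x\<in>Sn N. poly g x / dd (Sn N) x) = 0"
    by (rule lagrange_sum[OF Sn_finite[OF N]]) (use dg Sn_card[OF N] in simp)
  finally show ?thesis by simp
qed

fun Bk :: "nat \<Rightarrow> nat \<Rightarrow> real poly" where
  "Bk N 0 = 1"
| "Bk N (Suc 0) = [:0,1:]"
| "Bk N (Suc (Suc m)) = Polynomial.smult (1 / (real N - real m - 1))
     (Polynomial.smult (2 * (real N - real m - 1) + 1) ([:0,1:] * Bk N (Suc m)) - Polynomial.smult (real N - real m) (Bk N m))"

lemma Bk_deg: "degree (Bk N m) \<le> m"
proof (induction N m rule: Bk.induct)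
  case (1 N) then show ?case by simp
next
  case (2 N) then show ?case by simp
next
  case (3 N m)
  have "[:0,1:] * Bk N (Suc m) = pCons 0 (Bk N (Suc m))" by simp
  moreover have "degree (pCons 0 (Bk N (Suc m))) \<le> Suc (degree (Bk N (Suc m)))" by (rule degree_pCons_le)
  ultimately have dA: "degree ([:0,1:] * Bk N (Suc m)) \<le> Suc (Suc m)" using 3 by simp
  have dB: "degree (Bk N m) \<le> Suc (Suc m)" using 3 by simp
  have "degree (Polynomial.smult (2 * (real N - real m - 1) + 1) ([:0,1:] * Bk N (Suc m)) - Polynomial.smult (real N - real m) (Bk N m)) \<le> Suc (Suc m)"
    by (rule degree_diff_le; rule order.trans[OF degree_smult_le]) (use dA dB in auto)
  then have "degree (Polynomial.smult (1 / (real N - real m - 1)) (Polynomial.smult (2 * (real N - real m - 1) + 1) ([:0,1:] * Bk N (Suc m)) - Polynomial.smult (real N - real m) (Bk N m))) \<le> Suc (Suc m)"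
    by (rule order.trans[OF degree_smult_le])
  then show ?case by (simp only: Bk.simps)
qed

lemma node_rel1: assumes N: "N \<ge> 1" and x: "x \<in> Sn N"
  shows "poly (P (N - 1)) x = x * poly (P N) x"
proof -
  obtain n where n: "N = Suc n" using N by (cases N) auto
  have h: "(x^2-1) * poly (pderiv (P N)) x = real N * (x * poly (P N) x - poly (P (N-1)) x)"
    using leg_BC[of x n] n by simp
  have "(x^2-1) * poly (pderiv (P N)) x = 0"
    using x unfolding Sn_def by auto
  with h N show ?thesis by simp
qed

lemma Bk_node: "N \<ge> 1 \<Longrightarrow> x \<in> Sn N \<Longrightarrow> m \<le> N \<Longrightarrow>
   poly (P (N - m)) x = poly (Bk N m) x * poly (P N) x"
proof (induction N m rule: Bk.induct)
  case (1 N) then show ?case by simp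
next
  case (2 N) then show ?case using node_rel1[of N x] by simp
next
  case (3 N m)
  obtain k where k: "N = k + Suc (Suc m)" using 3(5) by (metis add.commute le_Suc_ex)
  have e1: "N - Suc m = Suc k" "N - m = Suc (Suc k)" "N - Suc (Suc m) = k" using k by auto
  have IH1: "poly (P (Suc k)) x = poly (Bk N (Suc m)) x * poly (P N) x"
    using 3(1)[OF 3(3,4)] 3(5) e1 by simp
  have IH2: "poly (P (Suc (Suc k))) x = poly (Bk N m) x * poly (P N) x"
    using 3(2)[OF 3(3,4)] 3(5) e1 by simp
  have rN: "real N - real m - 1 = real k + 1" "real N - real m = real k + 2" using k by auto
  have rec: "(real k + 2) * poly (P (Suc (Suc k))) x = (2 * real k + 3) * x * poly (P (Suc k)) x - (real k + 1) * poly (P k) x"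
    unfolding leg_poly2 by (simp add: field_simps)
  have "poly (Bk N (Suc (Suc m))) x * poly (P N) x
     = (1 / (real k + 1)) * ((2 * real k + 3) * x * (poly (Bk N (Suc m)) x * poly (P N) x) - (real k + 2) * (poly (Bk N m) x * poly (P N) x))"
    by (simp only: Bk.simps rN poly_smult poly_diff poly_mult) (simp add: algebra_simps)
  also have "\<dots> = (1 / (real k + 1)) * ((2 * real k + 3) * x * poly (P (Suc k)) x - (real k + 2) * poly (P (Suc (Suc k))) x)"
    unfolding IH1 IH2 ..
  also have "(2 * real k + 3) * x * poly (P (Suc k)) x - (real k + 2) * poly (P (Suc (Suc k))) x = (real k + 1) * poly (P k) x"
    using rec by linarith
  also have "(1 / (real k + 1)) * ((real k + 1) * poly (P k) x) = poly (P k) x" by simp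
  finally show ?case using e1 by simp
qed

lemma disc_orth: assumes N: "N \<ge> 1" and jk: "j < k" "k \<le> N"
  shows "(\<Sum>x\<in>Sn N. poly (P j) x * poly (P k) x / (poly (P N) x)^2) = 0"
proof -
  define B where "B = Bk N (N - k)"
  have "(\<Sum>x\<in>Sn N. poly (P j) x * poly (P k) x / (poly (P N) x)^2) = (\<Sum>x\<in>Sn N. poly (P j * B) x / poly (P N) x)"
  proof (rule sum.cong[OF refl])
    fix x assume x: "x \<in> Sn N"
    have "poly (P k) x = poly B x * poly (P N) x"
      using Bk_node[OF N x, of "N - k"] jk unfolding B_def by simp
    then show "poly (P j) x * poly (P k) x / (poly (P N) x)^2 = poly (P j * B) x / poly (P N) x"
      by (cases "poly (P N) x = 0") (simp_all add: power2_eq_square field_simps)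
  qed
  also have "\<dots> = 0"
  proof (rule disc_sum[OF N])
    have "degree (P j * B) \<le> j + (N - k)"
      using degree_mult_le[of "P j" B] leg_deg[of j] Bk_deg[of N "N - k"] unfolding B_def by simp
    then show "degree (P j * B) + 1 \<le> N" using jk by simp
  qed
  finally show ?thesis .
qed


lemma lgl_nodes_Sn: "lgl_nodes N = sorted_list_of_set (Sn N)"
  unfolding lgl_nodes_def Sn_def ..

lemma sum_nodes: assumes N: "N \<ge> 1"
  shows "(\<Sum>i\<in>{0..<N+1}. f (lgl_node N i)) = (\<Sum>x\<in>Sn N. (f x :: real))"
proof -
  define xs where "xs = lgl_nodes N"
  have fin: "finite (Sn N)" by (rule Sn_finite[OF N])
  have d: "distinct xs" and s: "set xs = Sn N" and l: "length xs = N + 1"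
    unfolding xs_def lgl_nodes_Sn using fin Sn_card[OF N] by auto
  have "(\<Sum>x\<in>Sn N. f x) = sum_list (map f xs)" unfolding s[symmetric] by (rule sum.distinct_set_conv_list[OF d])
  also have "\<dots> = (\<Sum>i\<in>{0..<length (map f xs)}. map f xs ! i)" by (rule sum_list_sum_nth)
  also have "\<dots> = (\<Sum>i\<in>{0..<N+1}. f (lgl_node N i))" using l unfolding lgl_node_def xs_def by simp
  finally show ?thesis by simp
qed

definition Gm :: "nat \<Rightarrow> nat \<Rightarrow> nat \<Rightarrow> real" where
  "Gm N j k = (\<Sum>i\<in>{0..<N+1}. lgl_weight N i * norm_legendre j (lgl_node N i) * norm_legendre k (lgl_node N i))"

lemma Gm_nodes: assumes N: "N \<ge> 1"
  shows "Gm N j k = (\<Sum>x\<in>Sn N. 2 / (real N * (real N + 1) * (poly (P N) x)^2) * norm_legendre j x * norm_legendre k x)"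
  unfolding Gm_def lgl_weight_def by (rule sum_nodes[OF N])

lemma Gm_off_lt: assumes N: "N \<ge> 1" and jk: "j < k" "k \<le> N" shows "Gm N j k = 0"
proof -
  define c where "c = real N * (real N + 1)"
  define sj where "sj = sqrt ((2 * real j + 1) / 2)"
  define sk where "sk = sqrt ((2 * real k + 1) / 2)"
  have "Gm N j k = (\<Sum>x\<in>Sn N. (2 * sj * sk / c) * (poly (P j) x * poly (P k) x / (poly (P N) x)^2))"
    unfolding Gm_nodes[OF N]
  proof (rule sum.cong[OF refl])
    fix x
    show "2 / (real N * (real N + 1) * (poly (P N) x)^2) * norm_legendre j x * norm_legendre k x =
          (2 * sj * sk / c) * (poly (P j) x * poly (P k) x / (poly (P N) x)^2)"
      unfolding norm_legendre_def sj_def[symmetric] sk_def[symmetric] c_def[symmetric]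
      by (cases "poly (P N) x = 0") (simp_all add: field_simps)
  qed
  also have "\<dots> = (2 * sj * sk / c) * (\<Sum>x\<in>Sn N. poly (P j) x * poly (P k) x / (poly (P N) x)^2)"
    by (simp add: sum_distrib_left)
  also have "\<dots> = 0" using disc_orth[OF N jk] by simp
  finally show ?thesis .
qed

lemma Gm_sym: "Gm N j k = Gm N k j"
  unfolding Gm_def by (simp add: mult_ac)

lemma Gm_off: assumes N: "N \<ge> 1" and "j \<le> N" "k \<le> N" "j \<noteq> k" shows "Gm N j k = 0"
proof (cases "j < k")
  case True then show ?thesis using Gm_off_lt[OF N] assms by simp
next
  case False then have "k < j" using assms by simp
  then show ?thesis using Gm_off_lt[OF N, of k j] assms Gm_sym by simp
qed

lemma Gm_diag_pos: assumes N: "N \<ge> 1" shows "Gm N j j > 0"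
proof -
  have "(\<Sum>x\<in>Sn N. 2 / (real N * (real N + 1) * (poly (P N) x)^2) * norm_legendre j x * norm_legendre j x) > 0"
  proof (rule sum_pos2[OF Sn_finite[OF N]])
    show "1 \<in> Sn N" unfolding Sn_def by simp
    have "norm_legendre j 1 * norm_legendre j 1 = (2 * real j + 1) / 2"
      unfolding norm_legendre_def leg_one by simp
    then show "0 < 2 / (real N * (real N + 1) * (poly (P N) 1)^2) * norm_legendre j 1 * norm_legendre j 1"
      using N by (simp add: leg_one mult.assoc)
    fix x
    show "0 \<le> 2 / (real N * (real N + 1) * (poly (P N) x)^2) * norm_legendre j x * norm_legendre j x"
      by (simp add: mult.assoc)
  qed
  then show ?thesis unfolding Gm_nodes[OF N] .
qed

lemma Gm_diag_nn: "Gm N j j \<ge> 0"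
  unfolding Gm_def lgl_weight_def by (intro sum_nonneg) (simp add: mult.assoc)

lemma quad_expand:
  fixes a :: "nat \<Rightarrow> nat \<Rightarrow> real" and w z :: "nat \<Rightarrow> real"
  shows "(\<Sum>i\<in>I. w i * ((\<Sum>j\<in>J. a i j * z j) * (\<Sum>k\<in>J. a i k * z k)))
       = (\<Sum>j\<in>J. \<Sum>k\<in>J. z j * z k * (\<Sum>i\<in>I. w i * a i j * a i k))"
proof -
  have "(\<Sum>i\<in>I. w i * ((\<Sum>j\<in>J. a i j * z j) * (\<Sum>k\<in>J. a i k * z k)))
      = (\<Sum>i\<in>I. \<Sum>j\<in>J. \<Sum>k\<in>J. z j * z k * (w i * a i j * a i k))"
    by (simp add: sum_product sum_distrib_left mult_ac)
  also have "\<dots> = (\<Sum>j\<in>J. \<Sum>i\<in>I. \<Sum>k\<in>J. z j * z k * (w i * a i j * a i k))"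
    by (rule sum.swap)
  also have "\<dots> = (\<Sum>j\<in>J. \<Sum>k\<in>J. \<Sum>i\<in>I. z j * z k * (w i * a i j * a i k))"
    by (rule sum.cong[OF refl], rule sum.swap)
  also have "\<dots> = (\<Sum>j\<in>J. \<Sum>k\<in>J. z j * z k * (\<Sum>i\<in>I. w i * a i j * a i k))"
    by (simp add: sum_distrib_left mult_ac)
  finally show ?thesis .
qed

lemma V_carrier: "lgl_vandermonde N \<in> carrier_mat (N+1) (N+1)"
  unfolding lgl_vandermonde_def by simp

lemma M_carrier: "lgl_mass N \<in> carrier_mat (N+1) (N+1)"
  unfolding lgl_mass_def by simp

lemma Vz_index: assumes "i < N + 1" "z \<in> carrier_vec (N+1)"
  shows "(lgl_vandermonde N *\<^sub>v z) $ i = (\<Sum>j\<in>{0..<N+1}. norm_legendre j (lgl_node N i) * z $ j)"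
  using assms unfolding lgl_vandermonde_def by (simp add: scalar_prod_def)

lemma Mv_index: assumes i: "i < N + 1" and y: "y \<in> carrier_vec (N+1)"
  shows "(lgl_mass N *\<^sub>v y) $ i = lgl_weight N i * y $ i"
proof -
  have "(lgl_mass N *\<^sub>v y) $ i = (\<Sum>j\<in>{0..<N+1}. (if i = j then lgl_weight N i else 0) * y $ j)"
    using assms unfolding lgl_mass_def by (simp add: scalar_prod_def)
  also have "\<dots> = lgl_weight N i * y $ i"
    by (subst sum_single[where x = i]) (use i in auto)
  finally show ?thesis .
qed

lemma Q_formula: assumes N: "N \<ge> 1" and z: "z \<in> carrier_vec (N+1)"
  shows "(lgl_vandermonde N *\<^sub>v z) \<bullet> (lgl_mass N *\<^sub>v (lgl_vandermonde N *\<^sub>v z))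
    = (\<Sum>j\<in>{0..<N+1}. Gm N j j * (z $ j)^2)"
proof -
  define y where "y = lgl_vandermonde N *\<^sub>v z"
  have yc: "y \<in> carrier_vec (N+1)" unfolding y_def by (rule mult_mat_vec_carrier[OF V_carrier z])
  have dimM: "dim_vec (lgl_mass N *\<^sub>v y) = N+1" unfolding lgl_mass_def by simp
  have "y \<bullet> (lgl_mass N *\<^sub>v y) = (\<Sum>i\<in>{0..<N+1}. y $ i * (lgl_mass N *\<^sub>v y) $ i)"
    unfolding scalar_prod_def dimM ..
  also have "\<dots> = (\<Sum>i\<in>{0..<N+1}. y $ i * (lgl_weight N i * y $ i))"
    by (rule sum.cong[OF refl]) (simp add: Mv_index[OF _ yc])
  also have "\<dots> = (\<Sum>i\<in>{0..<N+1}. lgl_weight N i * ((\<Sum>j\<in>{0..<N+1}. norm_legendre j (lgl_node N i) * z $ j)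
        * (\<Sum>k\<in>{0..<N+1}. norm_legendre k (lgl_node N i) * z $ k)))"
    by (rule sum.cong[OF refl]) (simp add: y_def Vz_index[OF _ z] mult_ac)
  also have "\<dots> = (\<Sum>j\<in>{0..<N+1}. \<Sum>k\<in>{0..<N+1}. z $ j * z $ k * Gm N j k)"
    unfolding quad_expand Gm_def ..
  also have "\<dots> = (\<Sum>j\<in>{0..<N+1}. z $ j * z $ j * Gm N j j)"
  proof (rule sum.cong[OF refl])
    fix j assume j: "j \<in> {0..<N+1}"
    show "(\<Sum>k\<in>{0..<N+1}. z $ j * z $ k * Gm N j k) = z $ j * z $ j * Gm N j j"
      by (rule sum_single) (use j Gm_off[OF N] in auto)
  qed
  also have "\<dots> = (\<Sum>j\<in>{0..<N+1}. Gm N j j * (z $ j)^2)"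
    by (simp add: power2_eq_square mult_ac)
  finally show ?thesis unfolding y_def .
qed


theorem proposition2:
  fixes N :: nat and \<sigma> :: "nat \<Rightarrow> real"
  assumes "N \<ge> 1"
    and "\<And>i. i \<le> N \<Longrightarrow> 0 \<le> \<sigma> i \<and> \<sigma> i \<le> 1"
    and "\<sigma> N = 0"
  shows "\<forall>u \<in> carrier_vec (N + 1).
           u \<bullet> ((transpose_mat (filter_mat N \<sigma>) * lgl_mass N * filter_mat N \<sigma> - lgl_mass N) *\<^sub>v u) \<le> 0"
proof
  fix u :: "real vec" assume u: "u \<in> carrier_vec (N + 1)"
  have N: "N \<ge> 1" by fact
  define n where "n = N + 1"
  define V where "V = lgl_vandermonde N"
  define M where "M = lgl_mass N"
  define C where "C = mat (N + 1) (N + 1) (\<lambda>(i, j). if i = j then \<sigma> i else (0::real))"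
  have Vc: "V \<in> carrier_mat n n" unfolding V_def n_def by (rule V_carrier)
  have Mc: "M \<in> carrier_mat n n" unfolding M_def n_def by (rule M_carrier)
  have Cc: "C \<in> carrier_mat n n" unfolding C_def n_def by simp
  have uc: "u \<in> carrier_vec n" using u n_def by simp
  define Q where "Q z = (V *\<^sub>v z) \<bullet> (M *\<^sub>v (V *\<^sub>v z))" for z
  have Qf: "Q z = (\<Sum>j\<in>{0..<n}. Gm N j j * (z $ j)^2)" if "z \<in> carrier_vec n" for z
    unfolding Q_def V_def M_def n_def using Q_formula[OF N] that n_def by simp
  have detV: "det V \<noteq> 0"
  proof
    assume "det V = 0"
    then obtain v where v: "v \<in> carrier_vec n" "v \<noteq> 0\<^sub>v n" "V *\<^sub>v v = 0\<^sub>v n"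
      using det_0_iff_vec_prod_zero_field[OF Vc] by blast
    have "Q v = 0" unfolding Q_def v(3) using Mc by simp
    moreover have "Q v > 0"
    proof -
      obtain j where j: "j < n" "v $ j \<noteq> 0"
      proof (rule ccontr)
        assume "\<not> thesis"
        then have "\<forall>j<n. v $ j = 0" using that by blast
        then have "v = 0\<^sub>v n" using v(1) by (intro eq_vecI) auto
        with v(2) show False by simp
      qed
      have "(\<Sum>j\<in>{0..<n}. Gm N j j * (v $ j)^2) > 0"
      proof (rule sum_pos2)
        show "finite {0..<n}" by simp
        show "j \<in> {0..<n}" using j by simp
        show "0 < Gm N j j * (v $ j)^2" using Gm_diag_pos[OF N, of j] j by simp
        fix i show "0 \<le> Gm N i i * (v $ i)^2" using Gm_diag_nn by simp
      qed
      then show ?thesis using Qf[OF v(1)] by simp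
    qed
    ultimately show False by simp
  qed
  obtain W where W: "mat_inverse V = Some W"
  proof (cases "mat_inverse V")
    case None
    then have "V \<notin> Units (ring_mat TYPE(real) n ())" by (rule mat_inverse(1)[OF Vc])
    moreover have "V \<in> Units (ring_mat TYPE(real) n ())" by (rule det_non_zero_imp_unit[OF Vc detV])
    ultimately show ?thesis by simp
  next
    case (Some W) then show ?thesis using that by simp
  qed
  from mat_inverse(2)[OF Vc W] have VW: "V * W = 1\<^sub>m n" and Wc: "W \<in> carrier_mat n n" by auto
  have F: "filter_mat N \<sigma> = V * C * W" unfolding filter_mat_def V_def[symmetric] C_def W by simp
  define w where "w = W *\<^sub>v u"
  have wc: "w \<in> carrier_vec n" unfolding w_def using Wc uc by simp
  have uVw: "u = V *\<^sub>v w"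
  proof -
    have "V *\<^sub>v w = (V * W) *\<^sub>v u" unfolding w_def using Vc Wc uc by simp
    also have "\<dots> = u" unfolding VW using uc by simp
    finally show ?thesis by simp
  qed
  define Fm where "Fm = V * C * W"
  have Fc: "Fm \<in> carrier_mat n n" unfolding Fm_def using Vc Cc Wc by simp
  define cw where "cw = C *\<^sub>v w"
  have cwc: "cw \<in> carrier_vec n" unfolding cw_def using Cc wc by simp
  have VCc: "V * C \<in> carrier_mat n n" using Vc Cc by simp
  have Wuc: "W *\<^sub>v u \<in> carrier_vec n" using Wc uc by simp
  have Fu: "Fm *\<^sub>v u = V *\<^sub>v cw"
  proof -
    have "Fm *\<^sub>v u = (V * C) *\<^sub>v (W *\<^sub>v u)" unfolding Fm_def by (rule assoc_mult_mat_vec[OF VCc Wc uc])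
    also have "\<dots> = V *\<^sub>v (C *\<^sub>v (W *\<^sub>v u))" by (rule assoc_mult_mat_vec[OF Vc Cc Wuc])
    finally show ?thesis unfolding cw_def w_def .
  qed
  have Fuc: "Fm *\<^sub>v u \<in> carrier_vec n" using Fc uc by simp
  have MFuc: "M *\<^sub>v (Fm *\<^sub>v u) \<in> carrier_vec n" using Mc Fuc by simp
  have Muc: "M *\<^sub>v u \<in> carrier_vec n" using Mc uc by simp
  have TMFc: "transpose_mat Fm * M * Fm \<in> carrier_mat n n" using Fc Mc by simp
  have "u \<bullet> ((transpose_mat Fm * M * Fm - M) *\<^sub>v u) = u \<bullet> ((transpose_mat Fm * M * Fm) *\<^sub>v u - M *\<^sub>v u)"
    by (subst minus_mult_distrib_mat_vec[OF TMFc Mc uc]) rule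
  also have "\<dots> = u \<bullet> ((transpose_mat Fm * M * Fm) *\<^sub>v u) - u \<bullet> (M *\<^sub>v u)"
    by (rule scalar_prod_minus_distrib[OF uc mult_mat_vec_carrier[OF TMFc uc] Muc])
  also have "(transpose_mat Fm * M * Fm) *\<^sub>v u = transpose_mat Fm *\<^sub>v (M *\<^sub>v (Fm *\<^sub>v u))"
  proof -
    have TFc: "transpose_mat Fm \<in> carrier_mat n n" using Fc by simp
    have TMc: "transpose_mat Fm * M \<in> carrier_mat n n" using Fc Mc by simp
    have "(transpose_mat Fm * M * Fm) *\<^sub>v u = (transpose_mat Fm * M) *\<^sub>v (Fm *\<^sub>v u)"
      by (rule assoc_mult_mat_vec[OF TMc Fc uc])
    also have "\<dots> = transpose_mat Fm *\<^sub>v (M *\<^sub>v (Fm *\<^sub>v u))"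
      by (rule assoc_mult_mat_vec[OF TFc Mc Fuc])
    finally show ?thesis .
  qed
  also have "u \<bullet> (transpose_mat Fm *\<^sub>v (M *\<^sub>v (Fm *\<^sub>v u))) = (transpose_mat Fm *\<^sub>v (M *\<^sub>v (Fm *\<^sub>v u))) \<bullet> u"
    by (rule comm_scalar_prod[OF uc]) (use Fc MFuc in simp)
  also have "\<dots> = (M *\<^sub>v (Fm *\<^sub>v u)) \<bullet> (Fm *\<^sub>v u)"
    by (rule transpose_vec_mult_scalar[OF Fc uc MFuc])
  also have "\<dots> = (Fm *\<^sub>v u) \<bullet> (M *\<^sub>v (Fm *\<^sub>v u))"
    by (rule comm_scalar_prod[OF MFuc Fuc])
  also have "\<dots> = Q cw" unfolding Q_def Fu ..
  also have "u \<bullet> (M *\<^sub>v u) = Q w" unfolding Q_def uVw ..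
  finally have eq: "u \<bullet> ((transpose_mat Fm * M * Fm - M) *\<^sub>v u) = Q cw - Q w" .
  have cwj: "cw $ j = \<sigma> j * w $ j" if "j < n" for j
  proof -
    have "cw $ j = (\<Sum>i\<in>{0..<n}. (if j = i then \<sigma> j else 0) * w $ i)"
      unfolding cw_def C_def using that wc n_def by (simp add: scalar_prod_def)
    also have "\<dots> = \<sigma> j * w $ j" by (subst sum_single[where x = j]) (use that in auto)
    finally show ?thesis .
  qed
  have "Q cw - Q w = (\<Sum>j\<in>{0..<n}. Gm N j j * ((\<sigma> j * w $ j)^2 - (w $ j)^2))"
    unfolding Qf[OF cwc] Qf[OF wc] sum_subtractf[symmetric]
    by (rule sum.cong[OF refl]) (simp add: cwj algebra_simps)
  also have "\<dots> \<le> 0"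
  proof (rule sum_nonpos)
    fix j assume j: "j \<in> {0..<n}"
    then have s: "0 \<le> \<sigma> j" "\<sigma> j \<le> 1" using assms(2)[of j] n_def by auto
    have "\<sigma> j * \<sigma> j \<le> 1 * 1" using s by (intro mult_mono) auto
    then have ss: "\<sigma> j * \<sigma> j \<le> 1" by simp
    have "(\<sigma> j * w $ j)^2 = (\<sigma> j * \<sigma> j) * (w $ j)^2" by (simp add: power2_eq_square mult_ac)
    also have "\<dots> \<le> 1 * (w $ j)^2" by (rule mult_right_mono[OF ss]) simp
    finally have "(\<sigma> j * w $ j)^2 \<le> (w $ j)^2" by simp
    then show "Gm N j j * ((\<sigma> j * w $ j)^2 - (w $ j)^2) \<le> 0"
      using Gm_diag_nn[of N j] by (simp add: mult_nonneg_nonpos)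
  qed
  finally show "u \<bullet> ((transpose_mat (filter_mat N \<sigma>) * lgl_mass N * filter_mat N \<sigma> - lgl_mass N) *\<^sub>v u) \<le> 0"
    using eq unfolding F Fm_def[symmetric] M_def[symmetric] by simp
qed


end
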